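(* Let $\{\mathcal{C}_n\}$ be a sequence of binary linear codes with rates $r_n\to r$ for some $r\in(0,1)$, and let $h^{(n)}$ be the average EXIT function of $\mathcal{C}_n$. The following are equivalent: (S1) $\{\mathcal{C}_n\}$ is capacity achieving on the BEC under bit-MAP decoding; (S2) $\lim_{n\to\infty}h^{(n)}(p)=0$ for $0\le p<1-r$ and $\lim_{n\to\infty}h^{(n)}(p)=1$ for $1-r<p\le1$; (S3) for every $0<\epsilon\le 1/2$, $\lim_{n\to\infty}\big(p^{(n)}_{1-\epsilon}-p^{(n)}_{\epsilon}\big)=0$, where $p^{(n)}_t=\inf\{p\in[0,1]:h^{(n)}(p)\ge t\}$.
   Context: Binary linear codes are assumed proper (no coordinate zero in all codewords) and of minimum distance at least $2$; the rate of a length-$N$, dimension-$K$ code is $K/N$. A codeword $\underline{X}$ is uniform on the code and sent over $\mathrm{BEC}(p)$ (each bit independently erased with probability $p$), giving $\underline{Y}$. The bit-MAP erasure probability of bit $i$, $P_{b,i}(p)$, is the probability that $X_i$ is not uniquely determined by $\underline{Y}$, and $P_b(p)=\frac1N\sum_i P_{b,i}(p)$. The average EXIT function is $h(p)=\frac1N\sum_i H(X_i\mid\underline{Y}_{\sim i})$ (entropy in bits, $\underline{Y}_{\sim i}$ omits coordinate $i$); it is continuous and strictly increasing on $[0,1]$ with $h(0)=0$, $h(1)=1$. A sequence of codes with rates $r_n\to r\in(0,1)$ is capacity achieving on the BEC under bit-MAP decoding if $\lim_n P_b^{(n)}(p)=0$ for every $p\in[0,1-r)$. *)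

theory Defs
  imports Complex_Main
begin

text \<open>A binary word of length N is a function nat => bool vanishing outside {..<N}.
  A binary linear code of length N is a set of such words containing 0 and closed
  under coordinatewise addition (xor).\<close>

definition zero_word :: "nat \<Rightarrow> bool" where
  "zero_word = (\<lambda>_. False)"

definition word_add :: "(nat \<Rightarrow> bool) \<Rightarrow> (nat \<Rightarrow> bool) \<Rightarrow> (nat \<Rightarrow> bool)" where
  "word_add c d = (\<lambda>j. c j \<noteq> d j)"

definition weight :: "(nat \<Rightarrow> bool) \<Rightarrow> nat" where
  "weight c = card {j. c j}"

definition binary_linear_code :: "nat \<Rightarrow> (nat \<Rightarrow> bool) set \<Rightarrow> bool" where
  "binary_linear_code N C \<longleftrightarrow>
     (\<forall>c\<in>C. \<forall>j. N \<le> j \<longrightarrow> \<not> c j) \<and>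
     zero_word \<in> C \<and> (\<forall>c\<in>C. \<forall>d\<in>C. word_add c d \<in> C)"

definition proper_code :: "nat \<Rightarrow> (nat \<Rightarrow> bool) set \<Rightarrow> bool" where
  "proper_code N C \<longleftrightarrow> (\<forall>i<N. \<exists>c\<in>C. c i)"

definition min_dist_ge2 :: "(nat \<Rightarrow> bool) set \<Rightarrow> bool" where
  "min_dist_ge2 C \<longleftrightarrow> (\<forall>c\<in>C. \<forall>d\<in>C. c \<noteq> d \<longrightarrow> weight (word_add c d) \<ge> 2)"

definition code_rate :: "nat \<Rightarrow> (nat \<Rightarrow> bool) set \<Rightarrow> real" where
  "code_rate N C = log 2 (real (card C)) / real N"

definition erasure_weight :: "real \<Rightarrow> nat \<Rightarrow> nat set \<Rightarrow> real" where
  "erasure_weight p m E = p ^ card E * (1 - p) ^ (m - card E)"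

definition consistent :: "(nat \<Rightarrow> bool) set \<Rightarrow> nat set \<Rightarrow> (nat \<Rightarrow> bool) \<Rightarrow> (nat \<Rightarrow> bool) set" where
  "consistent C S x = {c\<in>C. \<forall>j\<in>S. c j = x j}"

text \<open>Bit-MAP erasure probability of bit i: X uniform on C, E the erased set;
  X_i not uniquely determined by Y iff two codewords consistent with Y differ at i.\<close>
definition bitMAP_erasure :: "nat \<Rightarrow> (nat \<Rightarrow> bool) set \<Rightarrow> nat \<Rightarrow> real \<Rightarrow> real" where
  "bitMAP_erasure N C i p =
     (\<Sum>x\<in>C. \<Sum>E\<in>Pow {..<N}. (1 / real (card C)) * erasure_weight p N E *
        (if \<exists>c\<in>consistent C ({..<N} - E) x. \<exists>d\<in>consistent C ({..<N} - E) x. c i \<noteq> d i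
         then 1 else 0))"

definition avg_bitMAP_erasure :: "nat \<Rightarrow> (nat \<Rightarrow> bool) set \<Rightarrow> real \<Rightarrow> real" where
  "avg_bitMAP_erasure N C p = (\<Sum>i<N. bitMAP_erasure N C i p) / real N"

definition ent_term :: "real \<Rightarrow> real" where
  "ent_term q = (if q \<le> 0 then 0 else - q * log 2 q)"

definition binary_entropy :: "real \<Rightarrow> real" where
  "binary_entropy q = ent_term q + ent_term (1 - q)"

text \<open>H(X_i | Y_{~i}): Y_{~i} consists of the erasure set E \<subseteq> {..<N}-{i} and the values
  of X on {..<N}-{i}-E.  Given Y_{~i}, the posterior of X_i (X uniform on C) puts mass
  (#consistent codewords with c i) / (#consistent codewords) on True.\<close>
definition cond_entropy_bit :: "nat \<Rightarrow> (nat \<Rightarrow> bool) set \<Rightarrow> nat \<Rightarrow> real \<Rightarrow> real" where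
  "cond_entropy_bit N C i p =
     (\<Sum>x\<in>C. \<Sum>E\<in>Pow ({..<N} - {i}). (1 / real (card C)) * erasure_weight p (N - 1) E *
        binary_entropy
          (real (card {c\<in>consistent C ({..<N} - {i} - E) x. c i})
            / real (card (consistent C ({..<N} - {i} - E) x))))"

definition avg_EXIT :: "nat \<Rightarrow> (nat \<Rightarrow> bool) set \<Rightarrow> real \<Rightarrow> real" where
  "avg_EXIT N C p = (\<Sum>i<N. cond_entropy_bit N C i p) / real N"

definition exit_quantile :: "nat \<Rightarrow> (nat \<Rightarrow> bool) set \<Rightarrow> real \<Rightarrow> real" where
  "exit_quantile N C t = Inf {p\<in>{0..1}. avg_EXIT N C p \<ge> t}"

end

theory Submission
  imports Defs
begin

definition Pw :: "nat set \<Rightarrow> (nat set \<Rightarrow> real) \<Rightarrow> real \<Rightarrow> real" where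
  "Pw M g p = (\<Sum>E\<in>Pow M. p ^ card E * (1 - p) ^ (card M - card E) * g E)"

lemma Pw_empty[simp]: "Pw {} g p = g {}"
  by (simp add: Pw_def)

lemma Pw_insert:
  assumes "finite M" "a \<notin> M"
  shows "Pw (insert a M) g p = p * Pw M (\<lambda>E. g (insert a E)) p + (1 - p) * Pw M g p"
proof -
  have inj: "inj_on (insert a) (Pow M)"
    using assms(2) by (auto simp: inj_on_def)
  have disj: "Pow M \<inter> insert a ` Pow M = {}" using assms(2) by auto
  have fin: "finite (Pow M)" using assms(1) by simp
  have cM: "card (insert a M) = Suc (card M)" using assms by simp
  have "Pw (insert a M) g p = (\<Sum>E\<in>Pow M. p ^ card E * (1 - p) ^ (Suc (card M) - card E) * g E)
      + (\<Sum>E\<in>insert a ` Pow M. p ^ card E * (1 - p) ^ (Suc (card M) - card E) * g E)"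
    unfolding Pw_def Pow_insert cM
    by (rule sum.union_disjoint) (use fin disj in auto)
  also have "(\<Sum>E\<in>insert a ` Pow M. p ^ card E * (1 - p) ^ (Suc (card M) - card E) * g E)
      = (\<Sum>E\<in>Pow M. p ^ card (insert a E) * (1 - p) ^ (Suc (card M) - card (insert a E)) * g (insert a E))"
    by (rule sum.reindex[OF inj, unfolded comp_def])
  also have "\<dots> = p * Pw M (\<lambda>E. g (insert a E)) p"
    unfolding Pw_def sum_distrib_left
  proof (rule sum.cong[OF refl])
    fix E assume "E \<in> Pow M"
    then have "finite E" "a \<notin> E" using assms finite_subset by auto
    then show "p ^ card (insert a E) * (1 - p) ^ (Suc (card M) - card (insert a E)) * g (insert a E)
       = p * (p ^ card E * (1 - p) ^ (card M - card E) * g (insert a E))" by simp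
  qed
  also have "(\<Sum>E\<in>Pow M. p ^ card E * (1 - p) ^ (Suc (card M) - card E) * g E) = (1 - p) * Pw M g p"
    unfolding Pw_def sum_distrib_left
  proof (rule sum.cong[OF refl])
    fix E assume "E \<in> Pow M"
    then have "card E \<le> card M" using assms by (simp add: card_mono)
    then have "Suc (card M) - card E = Suc (card M - card E)" by simp
    then show "p ^ card E * (1 - p) ^ (Suc (card M) - card E) * g E
       = (1 - p) * (p ^ card E * (1 - p) ^ (card M - card E) * g E)" by simp
  qed
  finally show ?thesis by simp
qed

lemma Pw_cong: "(\<And>E. E \<subseteq> M \<Longrightarrow> g E = g' E) \<Longrightarrow> Pw M g p = Pw M g' p"
  unfolding Pw_def by (rule sum.cong) auto

lemma Pw_diff: "Pw M (\<lambda>E. f E - g E) p = Pw M f p - Pw M g p"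
  unfolding Pw_def by (simp add: sum_subtractf algebra_simps)

lemma Pw_sum: "Pw M (\<lambda>E. \<Sum>i\<in>I. f i E) p = (\<Sum>i\<in>I. Pw M (f i) p)"
  unfolding Pw_def by (simp add: sum_distrib_left sum.swap[of _ I])

lemma Pw_one: "finite M \<Longrightarrow> Pw M (\<lambda>_. 1) p = 1"
  by (induction M rule: finite_induct) (simp_all add: Pw_insert algebra_simps)

lemma Pw_at1: "finite M \<Longrightarrow> Pw M g 1 = g M"
  by (induction M arbitrary: g rule: finite_induct) (simp_all add: Pw_insert)

lemma Pw_at0: "finite M \<Longrightarrow> Pw M g 0 = g {}"
  by (induction M arbitrary: g rule: finite_induct) (simp_all add: Pw_insert)

lemma Pw_nonneg: "0 \<le> p \<Longrightarrow> p \<le> 1 \<Longrightarrow> (\<And>E. E \<subseteq> M \<Longrightarrow> 0 \<le> g E) \<Longrightarrow> 0 \<le> Pw M g p"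
  unfolding Pw_def by (intro sum_nonneg mult_nonneg_nonneg) auto

lemma Pw_le1: "finite M \<Longrightarrow> 0 \<le> p \<Longrightarrow> p \<le> 1 \<Longrightarrow> (\<And>E. E \<subseteq> M \<Longrightarrow> g E \<le> 1) \<Longrightarrow> Pw M g p \<le> 1"
proof -
  assume a: "finite M" "0 \<le> p" "p \<le> 1" "\<And>E. E \<subseteq> M \<Longrightarrow> g E \<le> 1"
  have "Pw M (\<lambda>E. 1 - g E) p \<ge> 0" by (rule Pw_nonneg) (use a in auto)
  then show ?thesis using Pw_diff[of M "\<lambda>_. 1" g p] Pw_one[OF a(1)] by simp
qed

lemma Pw_deriv:
  assumes "finite M"
  shows "(Pw M g has_real_derivative (\<Sum>j\<in>M. Pw (M - {j}) (\<lambda>E. g (insert j E) - g E) p)) (at p)"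
  using assms
proof (induction M arbitrary: g rule: finite_induct)
  case empty
  then show ?case by simp
next
  case (insert a M)
  have eq: "Pw (insert a M) g = (\<lambda>p. p * Pw M (\<lambda>E. g (insert a E)) p + (1 - p) * Pw M g p)"
    using insert by (simp add: Pw_insert fun_eq_iff)
  define D1 where "D1 = (\<Sum>j\<in>M. Pw (M - {j}) (\<lambda>E. g (insert j (insert a E)) - g (insert a E)) p)"
  define D2 where "D2 = (\<Sum>j\<in>M. Pw (M - {j}) (\<lambda>E. g (insert j E) - g E) p)"
  have d1: "(Pw M (\<lambda>E. g (insert a E)) has_real_derivative D1) (at p)"
    unfolding D1_def using insert.IH[of "\<lambda>E. g (insert a E)"] by (simp add: insert_commute)
  have d2: "(Pw M g has_real_derivative D2) (at p)"
    unfolding D2_def using insert.IH[of g] by simp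
  have der: "((\<lambda>p. p * Pw M (\<lambda>E. g (insert a E)) p + (1 - p) * Pw M g p) has_real_derivative
     (1 * Pw M (\<lambda>E. g (insert a E)) p + p * D1 + ((-1) * Pw M g p + (1 - p) * D2))) (at p)"
  proof -
    have o: "((\<lambda>p::real. 1 - p) has_real_derivative (-1)) (at p)"
      by (auto intro!: derivative_eq_intros)
    have A: "((\<lambda>x. x * Pw M (\<lambda>E. g (insert a E)) x) has_real_derivative 1 * Pw M (\<lambda>E. g (insert a E)) p + p * D1) (at p)"
      using DERIV_mult'[OF DERIV_ident d1] by (simp add: algebra_simps)
    have B: "((\<lambda>x. (1 - x) * Pw M g x) has_real_derivative (-1) * Pw M g p + (1 - p) * D2) (at p)"
      using DERIV_mult'[OF o d2] by (simp add: algebra_simps)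
    show ?thesis by (rule DERIV_add[OF A B])
  qed
  have "(\<Sum>j\<in>insert a M. Pw (insert a M - {j}) (\<lambda>E. g (insert j E) - g E) p)
      = Pw M (\<lambda>E. g (insert a E) - g E) p + (\<Sum>j\<in>M. Pw (insert a (M - {j})) (\<lambda>E. g (insert j E) - g E) p)"
  proof -
    have "(\<Sum>j\<in>M. Pw (insert a M - {j}) (\<lambda>E. g (insert j E) - g E) p)
        = (\<Sum>j\<in>M. Pw (insert a (M - {j})) (\<lambda>E. g (insert j E) - g E) p)"
      by (rule sum.cong[OF refl]) (use insert in \<open>auto simp: insert_Diff_if\<close>)
    moreover have "insert a M - {a} = M" using insert by auto
    ultimately show ?thesis using insert by simp
  qed
  also have "(\<Sum>j\<in>M. Pw (insert a (M - {j})) (\<lambda>E. g (insert j E) - g E) p) = p * D1 + (1 - p) * D2"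
    unfolding D1_def D2_def sum_distrib_left sum.distrib[symmetric]
    by (rule sum.cong[OF refl]) (use insert in \<open>simp add: Pw_insert\<close>)
  finally have "(\<Sum>j\<in>insert a M. Pw (insert a M - {j}) (\<lambda>E. g (insert j E) - g E) p)
     = 1 * Pw M (\<lambda>E. g (insert a E)) p + p * D1 + ((-1) * Pw M g p + (1 - p) * D2)"
    by (simp add: Pw_diff)
  then show ?case using der eq by simp
qed

lemma Pw_mono:
  assumes "finite M" "\<And>E F. E \<subseteq> F \<Longrightarrow> F \<subseteq> M \<Longrightarrow> g E \<le> g F"
    "0 \<le> x" "x \<le> y" "y \<le> 1"
  shows "Pw M g x \<le> Pw M g y"
proof (rule DERIV_nonneg_imp_nondecreasing[OF assms(4)])
  fix t assume t: "x \<le> t" "t \<le> y"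
  show "\<exists>d. (Pw M g has_real_derivative d) (at t) \<and> 0 \<le> d"
  proof (intro exI conjI)
    show "(Pw M g has_real_derivative (\<Sum>j\<in>M. Pw (M - {j}) (\<lambda>E. g (insert j E) - g E) t)) (at t)" by (rule Pw_deriv[OF assms(1)])
    show "0 \<le> (\<Sum>j\<in>M. Pw (M - {j}) (\<lambda>E. g (insert j E) - g E) t)"
      by (intro sum_nonneg Pw_nonneg) (use t assms in \<open>auto intro!: assms(2)\<close>)
  qed
qed


definition Zc :: "(nat \<Rightarrow> bool) set \<Rightarrow> nat set \<Rightarrow> (nat \<Rightarrow> bool) set" where
  "Zc C S = {c\<in>C. \<forall>j\<in>S. \<not> c j}"

definition undet :: "(nat \<Rightarrow> bool) set \<Rightarrow> nat \<Rightarrow> nat set \<Rightarrow> bool" where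
  "undet C i S \<longleftrightarrow> (\<exists>c\<in>Zc C S. c i)"

lemma wa_cancel[simp]: "word_add d (word_add d c) = c" "word_add (word_add c d) d = c"
  by (auto simp: word_add_def)

lemma wa_apply[simp]: "word_add c d j = (c j \<noteq> d j)"
  by (simp add: word_add_def)

lemma code_finite:
  assumes "binary_linear_code N C" shows "finite C"
proof -
  have "C \<subseteq> (\<lambda>A j. j \<in> A) ` Pow {..<N}"
  proof
    fix c assume "c \<in> C"
    then have "\<forall>j. N \<le> j \<longrightarrow> \<not> c j" using assms by (auto simp: binary_linear_code_def)
    then have "{j. c j} \<in> Pow {..<N}" by (auto simp: not_less[symmetric])
    moreover have "c = (\<lambda>j. j \<in> {j. c j})" by simp
    ultimately show "c \<in> (\<lambda>A j. j \<in> A) ` Pow {..<N}" by blast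
  qed
  then show ?thesis by (rule finite_subset) simp
qed

lemma half_card:
  assumes "finite A" "d i" "\<And>c. c \<in> A \<Longrightarrow> word_add c d \<in> A"
  shows "card A = 2 * card {c\<in>A. \<not> c i}"
proof -
  have img: "(\<lambda>c. word_add c d) ` {c\<in>A. \<not> c i} = {c\<in>A. c i}"
  proof
    show "(\<lambda>c. word_add c d) ` {c\<in>A. \<not> c i} \<subseteq> {c\<in>A. c i}" using assms by auto
    show "{c\<in>A. c i} \<subseteq> (\<lambda>c. word_add c d) ` {c\<in>A. \<not> c i}"
    proof
      fix c assume c: "c \<in> {c\<in>A. c i}"
      then have "word_add c d \<in> {c\<in>A. \<not> c i}" using assms by auto
      moreover have "c = word_add (word_add c d) d" by simp
      ultimately show "c \<in> (\<lambda>c. word_add c d) ` {c\<in>A. \<not> c i}" by blast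
    qed
  qed
  have inj: "inj_on (\<lambda>c. word_add c d) {c\<in>A. \<not> c i}"
    by (rule inj_onI) (metis wa_cancel(2))
  have "card {c\<in>A. c i} = card {c\<in>A. \<not> c i}"
    using card_image[OF inj] img by simp
  moreover have "card A = card {c\<in>A. c i} + card {c\<in>A. \<not> c i}"
  proof -
    have "A = {c\<in>A. c i} \<union> {c\<in>A. \<not> c i}" by auto
    then show ?thesis using assms(1) by (metis (no_types, lifting) card_Un_disjoint disjoint_iff finite_Un mem_Collect_eq)
  qed
  ultimately show ?thesis by simp
qed

context
  fixes N :: nat and C :: "(nat \<Rightarrow> bool) set"
  assumes code: "binary_linear_code N C"
begin

lemma finC: "finite C" by (rule code_finite[OF code])

lemma zero_in: "zero_word \<in> C" using code by (simp add: binary_linear_code_def)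

lemma add_in: "c \<in> C \<Longrightarrow> d \<in> C \<Longrightarrow> word_add c d \<in> C" using code by (simp add: binary_linear_code_def)

lemma vanish: "c \<in> C \<Longrightarrow> N \<le> j \<Longrightarrow> \<not> c j" using code unfolding binary_linear_code_def by blast

lemma cardC_pos: "card C > 0" using finC zero_in card_gt_0_iff by blast

lemma Zc_fin: "finite (Zc C S)" using finC by (simp add: Zc_def)

lemma Zc_zero: "zero_word \<in> Zc C S" using zero_in by (simp add: Zc_def zero_word_def)

lemma Zc_card_pos: "card (Zc C S) > 0" using Zc_fin Zc_zero card_gt_0_iff by blast

lemma cons_fin: "finite (consistent C S x)" using finC by (simp add: consistent_def)

lemma cons_add: "c \<in> consistent C S x \<Longrightarrow> d \<in> Zc C S \<Longrightarrow> word_add c d \<in> consistent C S x"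
  unfolding consistent_def Zc_def using add_in by (simp (no_asm_simp)) fastforce

lemma cons_diff: "x \<in> C \<Longrightarrow> c \<in> consistent C S x \<Longrightarrow> word_add x c \<in> Zc C S"
  unfolding consistent_def Zc_def using add_in by fastforce

lemma cons_self: "x \<in> C \<Longrightarrow> x \<in> consistent C S x"
  by (simp add: consistent_def)

lemma undet_iff_cons:
  assumes "x \<in> C"
  shows "(\<exists>c\<in>consistent C S x. \<exists>d\<in>consistent C S x. c i \<noteq> d i) \<longleftrightarrow> undet C i S"
proof
  assume "\<exists>c\<in>consistent C S x. \<exists>d\<in>consistent C S x. c i \<noteq> d i"
  then obtain c d where cd: "c \<in> consistent C S x" "d \<in> consistent C S x" "c i \<noteq> d i" by blast
  have "c \<in> C" "d \<in> C" "\<forall>j\<in>S. c j = x j" "\<forall>j\<in>S. d j = x j" using cd(1,2) unfolding consistent_def by blast+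
  then have "word_add c d \<in> Zc C S" unfolding Zc_def using add_in by simp
  moreover have "word_add c d i" using cd(3) by simp
  ultimately show "undet C i S" unfolding undet_def by blast
next
  assume "undet C i S"
  then obtain d where d: "d \<in> Zc C S" "d i" unfolding undet_def by blast
  have 1: "x \<in> consistent C S x" using cons_self[OF assms] .
  have 2: "word_add x d \<in> consistent C S x" using cons_add[OF 1 d(1)] .
  have "x i \<noteq> word_add x d i" using d(2) by simp
  then show "\<exists>c\<in>consistent C S x. \<exists>d\<in>consistent C S x. c i \<noteq> d i" using 1 2 by blast
qed

lemma entropy_eq:
  assumes "x \<in> C"
  shows "binary_entropy (real (card {c\<in>consistent C S x. c i}) / real (card (consistent C S x)))
      = (if undet C i S then 1 else 0)"
proof (cases "undet C i S")
  case True
  then obtain d where d: "d \<in> Zc C S" "d i" by (auto simp: undet_def)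
  let ?A = "consistent C S x"
  have h: "card ?A = 2 * card {c\<in>?A. \<not> c i}"
    by (rule half_card[of ?A d i, OF cons_fin d(2)]) (rule cons_add[OF _ d(1)])
  have "card ?A = card {c\<in>?A. c i} + card {c\<in>?A. \<not> c i}"
  proof -
    have "?A = {c\<in>?A. c i} \<union> {c\<in>?A. \<not> c i}" by auto
    then show ?thesis using cons_fin by (metis (no_types, lifting) card_Un_disjoint disjoint_iff finite_Un mem_Collect_eq)
  qed
  moreover have "card ?A > 0" using cons_fin cons_self[OF assms] card_gt_0_iff by blast
  ultimately have r: "real (card {c\<in>?A. c i}) / real (card ?A) = 1/2" using h by simp
  show ?thesis unfolding r using True by (simp add: binary_entropy_def ent_term_def log_divide)
next
  case False
  let ?A = "consistent C S x"
  have all: "\<forall>c\<in>?A. c i = x i"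
  proof
    fix c assume "c \<in> ?A"
    then have "word_add x c \<in> Zc C S" by (rule cons_diff[OF assms])
    then have "\<not> word_add x c i" using False by (auto simp: undet_def)
    then show "c i = x i" by simp
  qed
  have pos: "card ?A > 0" using cons_fin cons_self[OF assms] card_gt_0_iff by blast
  show ?thesis
  proof (cases "x i")
    case True
    then have "{c\<in>?A. c i} = ?A" using all by auto
    then have r: "real (card {c\<in>?A. c i}) / real (card ?A) = 1" using pos by simp
    show ?thesis unfolding r using False by (simp add: binary_entropy_def ent_term_def)
  next
    case f: False
    then have "{c\<in>?A. c i} = {}" using all by auto
    then have r: "real (card {c\<in>?A. c i}) / real (card ?A) = 0" by (simp only: card.empty) simp?
    show ?thesis unfolding r using False by (simp add: binary_entropy_def ent_term_def)
  qed
qed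

lemma avg_x:
  fixes f :: "(nat \<Rightarrow> bool) \<Rightarrow> nat set \<Rightarrow> real"
  assumes "\<And>x E. x \<in> C \<Longrightarrow> E \<in> Pow M \<Longrightarrow> f x E = g E"
  shows "(\<Sum>x\<in>C. \<Sum>E\<in>Pow M. (1 / real (card C)) * erasure_weight p m E * f x E)
       = (\<Sum>E\<in>Pow M. erasure_weight p m E * g E)"
proof -
  have "(\<Sum>x\<in>C. \<Sum>E\<in>Pow M. (1 / real (card C)) * erasure_weight p m E * f x E)
      = (\<Sum>x\<in>C. (1 / real (card C)) * (\<Sum>E\<in>Pow M. erasure_weight p m E * g E))"
    by (rule sum.cong[OF refl]) (simp add: assms sum_distrib_left mult.assoc)
  also have "\<dots> = (\<Sum>E\<in>Pow M. erasure_weight p m E * g E)"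
    using cardC_pos by simp
  finally show ?thesis .
qed

lemma cond_entropy_eq:
  assumes "i < N"
  shows "cond_entropy_bit N C i p =
    Pw ({..<N} - {i}) (\<lambda>E. if undet C i ({..<N} - {i} - E) then 1 else 0) p"
proof -
  have c: "card ({..<N} - {i}) = N - 1" using assms by simp
  show ?thesis
    unfolding cond_entropy_bit_def
    by (subst avg_x[where g = "\<lambda>E. if undet C i ({..<N} - {i} - E) then 1 else 0"])
       (simp_all add: entropy_eq Pw_def erasure_weight_def c)
qed

lemma bitMAP_eq0:
  "bitMAP_erasure N C i p = Pw {..<N} (\<lambda>E. if undet C i ({..<N} - E) then 1 else 0) p"
proof -
  have "bitMAP_erasure N C i p = (\<Sum>E\<in>Pow {..<N}. erasure_weight p N E * (if undet C i ({..<N} - E) then 1 else 0))"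
    unfolding bitMAP_erasure_def
  proof (rule avg_x)
    fix x E assume "x \<in> C"
    show "(if \<exists>c\<in>consistent C ({..<N} - E) x. \<exists>d\<in>consistent C ({..<N} - E) x. c i \<noteq> d i then 1 else 0)
       = (if undet C i ({..<N} - E) then 1 else (0::real))"
      using undet_iff_cons[OF \<open>x \<in> C\<close>, of "{..<N} - E" i] by simp
  qed
  then show ?thesis by (simp add: Pw_def erasure_weight_def)
qed

lemma bitMAP_eq:
  assumes "i < N"
  shows "bitMAP_erasure N C i p = p * cond_entropy_bit N C i p"
proof -
  let ?M = "{..<N} - {i}"
  have M: "{..<N} = insert i ?M" using assms by auto
  have "bitMAP_erasure N C i p = Pw (insert i ?M) (\<lambda>E. if undet C i ({..<N} - E) then 1 else 0) p"
    using bitMAP_eq0 M by simp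
  also have "\<dots> = p * Pw ?M (\<lambda>E. if undet C i ({..<N} - insert i E) then 1 else 0) p
      + (1 - p) * Pw ?M (\<lambda>E. if undet C i ({..<N} - E) then 1 else 0) p"
    by (rule Pw_insert) simp_all
  also have "Pw ?M (\<lambda>E. if undet C i ({..<N} - E) then 1 else 0) p = Pw ?M (\<lambda>E. 0) p"
  proof (rule Pw_cong)
    fix E assume "E \<subseteq> ?M"
    then have "i \<in> {..<N} - E" using assms by auto
    then have "\<not> undet C i ({..<N} - E)" unfolding undet_def Zc_def by blast
    then show "(if undet C i ({..<N} - E) then 1 else 0) = (0::real)" by simp
  qed
  also have "Pw ?M (\<lambda>E. 0) p = 0" by (simp add: Pw_def)
  also have "Pw ?M (\<lambda>E. if undet C i ({..<N} - insert i E) then 1 else 0) p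
     = Pw ?M (\<lambda>E. if undet C i (?M - E) then 1 else 0) p"
  proof (rule Pw_cong)
    fix E have "{..<N} - insert i E = ?M - E" by blast
    then show "(if undet C i ({..<N} - insert i E) then 1 else 0) = (if undet C i (?M - E) then 1 else (0::real))" by simp
  qed
  finally show ?thesis using cond_entropy_eq[OF assms] by simp
qed

end

definition fG :: "nat \<Rightarrow> (nat \<Rightarrow> bool) set \<Rightarrow> real \<Rightarrow> real" where
  "fG N C p = Pw {..<N} (\<lambda>E. log 2 (real (card (Zc C ({..<N} - E))))) p / real N"

context
  fixes N :: nat and C :: "(nat \<Rightarrow> bool) set"
  assumes code: "binary_linear_code N C"
      and proper: "proper_code N C" and md: "min_dist_ge2 C" and Npos: "N > 0"
begin

lemma Zc_insert: "Zc C (insert j S) = {c\<in>Zc C S. \<not> c j}"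
  unfolding Zc_def by blast

lemma log_step:
  assumes "j < N" "E \<subseteq> {..<N} - {j}"
  shows "log 2 (real (card (Zc C ({..<N} - insert j E)))) - log 2 (real (card (Zc C ({..<N} - E))))
     = (if undet C j ({..<N} - {j} - E) then 1 else 0)"
proof -
  define S where "S = {..<N} - {j} - E"
  have e1: "{..<N} - insert j E = S" unfolding S_def by blast
  have e2: "{..<N} - E = insert j S" unfolding S_def using assms by blast
  have pos: "card (Zc C (insert j S)) > 0" by (rule Zc_card_pos[OF code])
  show ?thesis
  proof (cases "undet C j S")
    case True
    then obtain d where d: "d \<in> Zc C S" "d j" unfolding undet_def by blast
    have "card (Zc C S) = 2 * card {c\<in>Zc C S. \<not> c j}"
    proof (rule half_card[of "Zc C S" d j, OF Zc_fin[OF code] d(2)])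
      fix c assume "c \<in> Zc C S"
      then show "word_add c d \<in> Zc C S" using d(1) add_in[OF code] unfolding Zc_def by auto
    qed
    then have "real (card (Zc C S)) = 2 * real (card (Zc C (insert j S)))"
      unfolding Zc_insert by simp
    then show ?thesis unfolding e1 e2 using True pos S_def by (simp add: log_mult)
  next
    case False
    then have "Zc C (insert j S) = Zc C S" unfolding Zc_insert undet_def by blast
    then show ?thesis unfolding e1 e2 using False S_def by simp
  qed
qed

lemma fG_deriv: "(fG N C has_real_derivative avg_EXIT N C p) (at p)"
proof -
  let ?f = "\<lambda>E. log 2 (real (card (Zc C ({..<N} - E))))"
  have d: "(Pw {..<N} ?f has_real_derivative (\<Sum>j\<in>{..<N}. Pw ({..<N} - {j}) (\<lambda>E. ?f (insert j E) - ?f E) p)) (at p)"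
    by (rule Pw_deriv) simp
  have "(\<Sum>j\<in>{..<N}. Pw ({..<N} - {j}) (\<lambda>E. ?f (insert j E) - ?f E) p) = (\<Sum>j<N. cond_entropy_bit N C j p)"
  proof (rule sum.cong[OF refl])
    fix j assume j: "j \<in> {..<N}"
    have "Pw ({..<N} - {j}) (\<lambda>E. ?f (insert j E) - ?f E) p
        = Pw ({..<N} - {j}) (\<lambda>E. if undet C j ({..<N} - {j} - E) then 1 else 0) p"
      by (rule Pw_cong) (use j log_step in auto)
    then show "Pw ({..<N} - {j}) (\<lambda>E. ?f (insert j E) - ?f E) p = cond_entropy_bit N C j p"
      using cond_entropy_eq[OF code] j by simp
  qed
  then show ?thesis unfolding fG_def avg_EXIT_def using DERIV_cdivide[OF d, of "real N"]
    by (simp add: fun_eq_iff)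
qed

lemma Zc_all: "Zc C {..<N} = {zero_word}"
proof
  show "Zc C {..<N} \<subseteq> {zero_word}"
  proof
    fix c assume c: "c \<in> Zc C {..<N}"
    have "\<forall>j. \<not> c j"
    proof
      fix j show "\<not> c j"
      proof (cases "j < N")
        case True then show ?thesis using c unfolding Zc_def by blast
      next
        case False then show ?thesis using c vanish[OF code, of c j] unfolding Zc_def by simp
      qed
    qed
    then show "c \<in> {zero_word}" by (auto simp: zero_word_def)
  qed
  show "{zero_word} \<subseteq> Zc C {..<N}" using Zc_zero[OF code] by auto
qed

lemma fG0: "fG N C 0 = 0"
  unfolding fG_def by (simp add: Pw_at0 Zc_all)

lemma fG1: "fG N C 1 = code_rate N C"
proof -
  have "Zc C {} = C" unfolding Zc_def by simp
  then show ?thesis unfolding fG_def code_rate_def by (simp add: Pw_at1)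
qed

lemma ceb0: "i < N \<Longrightarrow> cond_entropy_bit N C i 0 = 0"
proof -
  assume i: "i < N"
  have "\<not> undet C i ({..<N} - {i})"
  proof
    assume "undet C i ({..<N} - {i})"
    then obtain c where c: "c \<in> C" "\<forall>j\<in>{..<N} - {i}. \<not> c j" "c i" unfolding undet_def Zc_def by blast
    have "{j. c j} = {i}"
    proof
      show "{j. c j} \<subseteq> {i}"
      proof
        fix j assume "j \<in> {j. c j}"
        then have "c j" by simp
        moreover have "j < N" using vanish[OF code c(1), of j] \<open>c j\<close> by (meson not_le)
        ultimately show "j \<in> {i}" using c(2) by auto
      qed
      show "{i} \<subseteq> {j. c j}" using c(3) by auto
    qed
    moreover have "word_add c zero_word = c" by (simp add: word_add_def zero_word_def)
    moreover have "c \<noteq> zero_word" using c(3) by (auto simp: zero_word_def)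
    ultimately show False using md c(1) zero_in[OF code] unfolding min_dist_ge2_def weight_def by force
  qed
  then show ?thesis using cond_entropy_eq[OF code i] by (simp add: Pw_at0)
qed

lemma ceb1: "i < N \<Longrightarrow> cond_entropy_bit N C i 1 = 1"
proof -
  assume i: "i < N"
  have e: "{..<N} - {i} - ({..<N} - {i}) = {}" by simp
  have "undet C i {}" using proper i unfolding proper_code_def undet_def Zc_def by auto
  then show ?thesis using cond_entropy_eq[OF code i] by (simp add: Pw_at1 e)
qed

lemma h0: "avg_EXIT N C 0 = 0"
  unfolding avg_EXIT_def by (simp add: ceb0)

lemma h1: "avg_EXIT N C 1 = 1"
  unfolding avg_EXIT_def using Npos by (simp add: ceb1)

lemma ceb_bounds: "i < N \<Longrightarrow> 0 \<le> p \<Longrightarrow> p \<le> 1 \<Longrightarrow> 0 \<le> cond_entropy_bit N C i p \<and> cond_entropy_bit N C i p \<le> 1"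
  using cond_entropy_eq[OF code] by (auto intro!: Pw_nonneg Pw_le1)

lemma h_bounds: "0 \<le> p \<Longrightarrow> p \<le> 1 \<Longrightarrow> 0 \<le> avg_EXIT N C p \<and> avg_EXIT N C p \<le> 1"
proof -
  assume p: "0 \<le> p" "p \<le> 1"
  have "(\<Sum>i<N. cond_entropy_bit N C i p) \<le> (\<Sum>i<N. 1)"
    by (rule sum_mono) (use ceb_bounds p in auto)
  moreover have "0 \<le> (\<Sum>i<N. cond_entropy_bit N C i p)"
    by (rule sum_nonneg) (use ceb_bounds p in auto)
  ultimately show ?thesis unfolding avg_EXIT_def using Npos by (simp add: divide_le_eq)
qed

lemma h_mono: "0 \<le> x \<Longrightarrow> x \<le> y \<Longrightarrow> y \<le> 1 \<Longrightarrow> avg_EXIT N C x \<le> avg_EXIT N C y"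
proof -
  assume xy: "0 \<le> x" "x \<le> y" "y \<le> 1"
  have "(\<Sum>i<N. cond_entropy_bit N C i x) \<le> (\<Sum>i<N. cond_entropy_bit N C i y)"
  proof (rule sum_mono)
    fix i assume "i \<in> {..<N}"
    then have i: "i < N" by simp
    have "Pw ({..<N} - {i}) (\<lambda>E. if undet C i ({..<N} - {i} - E) then 1 else 0) x
       \<le> Pw ({..<N} - {i}) (\<lambda>E. if undet C i ({..<N} - {i} - E) then 1 else 0) y"
    proof (rule Pw_mono[OF _ _ xy])
      fix E F :: "nat set" assume "E \<subseteq> F"
      then have "Zc C ({..<N} - {i} - E) \<subseteq> Zc C ({..<N} - {i} - F)" unfolding Zc_def by blast
      then show "(if undet C i ({..<N} - {i} - E) then 1 else 0) \<le> (if undet C i ({..<N} - {i} - F) then 1 else (0::real))"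
        unfolding undet_def by auto
    qed simp
    then show "cond_entropy_bit N C i x \<le> cond_entropy_bit N C i y" using cond_entropy_eq[OF code i] by simp
  qed
  then show ?thesis unfolding avg_EXIT_def using Npos by (simp add: divide_right_mono)
qed

lemma Pb_eq: "avg_bitMAP_erasure N C p = p * avg_EXIT N C p"
  unfolding avg_bitMAP_erasure_def avg_EXIT_def
  by (simp add: bitMAP_eq[OF code] sum_distrib_left)

end

lemma mvt_bounds:
  fixes G h :: "real \<Rightarrow> real"
  assumes deriv: "\<And>x. (G has_real_derivative h x) (at x)"
    and mono: "\<And>x y. 0 \<le> x \<Longrightarrow> x \<le> y \<Longrightarrow> y \<le> 1 \<Longrightarrow> h x \<le> h y"
    and ab: "0 \<le> a" "a \<le> b" "b \<le> 1"
  shows "h a * (b - a) \<le> G b - G a \<and> G b - G a \<le> h b * (b - a)"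
proof (cases "a = b")
  case True then show ?thesis by simp
next
  case False
  then have "a < b" using ab by simp
  from MVT2[OF this deriv] obtain z where z: "a < z" "z < b" "G b - G a = (b - a) * h z" by blast
  have "h a \<le> h z" "h z \<le> h b" using mono z ab by auto
  then show ?thesis using z \<open>a < b\<close> by (auto simp: mult.commute intro: mult_right_mono)
qed

context
  fixes h G :: "nat \<Rightarrow> real \<Rightarrow> real" and R :: "nat \<Rightarrow> real" and r :: real
  assumes deriv: "\<And>n x. (G n has_real_derivative h n x) (at x)"
    and mono: "\<And>n x y. 0 \<le> x \<Longrightarrow> x \<le> y \<Longrightarrow> y \<le> 1 \<Longrightarrow> h n x \<le> h n y"
    and hb: "\<And>n x. 0 \<le> x \<Longrightarrow> x \<le> 1 \<Longrightarrow> 0 \<le> h n x \<and> h n x \<le> 1"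
    and h0: "\<And>n. h n 0 = 0" and h1: "\<And>n. h n 1 = 1"
    and G0: "\<And>n. G n 0 = 0" and G1: "\<And>n. G n 1 = R n"
    and Rlim: "R \<longlonglongrightarrow> r" and r: "0 < r" "r < 1"
begin

lemma mb: "0 \<le> a \<Longrightarrow> a \<le> b \<Longrightarrow> b \<le> 1 \<Longrightarrow> h n a * (b - a) \<le> G n b - G n a \<and> G n b - G n a \<le> h n b * (b - a)"
  by (rule mvt_bounds[OF deriv mono])

lemma Qne: "t \<le> 1 \<Longrightarrow> {p\<in>{0..1}. t \<le> h n p} \<noteq> {}"
  using h1 by force

lemma Qbdd: "bdd_below {p\<in>{0..1}. t \<le> h n p}"
  by (rule bdd_belowI[of _ 0]) auto

lemma Q2: "0 \<le> p \<Longrightarrow> p \<le> 1 \<Longrightarrow> p < Inf {p\<in>{0..1}. t \<le> h n p} \<Longrightarrow> h n p < t"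
  using cInf_lower[OF _ Qbdd, of p t n] by force

lemma Q3: "t \<le> 1 \<Longrightarrow> Inf {p\<in>{0..1}. t \<le> h n p} < p \<Longrightarrow> p \<le> 1 \<Longrightarrow> t \<le> h n p"
proof -
  assume a: "t \<le> 1" "Inf {p\<in>{0..1}. t \<le> h n p} < p" "p \<le> 1"
  then obtain q where q: "q \<in> {p\<in>{0..1}. t \<le> h n p}" "q < p"
    using cInf_less_iff[OF Qne[OF a(1)] Qbdd] by blast
  then show "t \<le> h n p" using mono[of q p n] a by auto
qed

lemma Q4: "t \<le> t' \<Longrightarrow> t' \<le> 1 \<Longrightarrow> Inf {p\<in>{0..1}. t \<le> h n p} \<le> Inf {p\<in>{0..1}. t' \<le> h n p}"
  by (rule cInf_superset_mono[OF Qne Qbdd]) auto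

lemma Qle: "t \<le> 1 \<Longrightarrow> p \<in> {0..1} \<Longrightarrow> t \<le> h n p \<Longrightarrow> Inf {p\<in>{0..1}. t \<le> h n p} \<le> p"
  by (rule cInf_lower[OF _ Qbdd]) auto

definition "S1 \<longleftrightarrow> (\<forall>p. 0 \<le> p \<and> p < 1 - r \<longrightarrow> (\<lambda>n. p * h n p) \<longlonglongrightarrow> 0)"
definition "S2a \<longleftrightarrow> (\<forall>p. 0 \<le> p \<and> p < 1 - r \<longrightarrow> (\<lambda>n. h n p) \<longlonglongrightarrow> 0)"
definition "S2b \<longleftrightarrow> (\<forall>p. 1 - r < p \<and> p \<le> 1 \<longrightarrow> (\<lambda>n. h n p) \<longlonglongrightarrow> 1)"
definition "S3 \<longleftrightarrow> (\<forall>\<epsilon>. 0 < \<epsilon> \<and> \<epsilon> \<le> 1/2 \<longrightarrow>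
             (\<lambda>n. Inf {p\<in>{0..1}. 1 - \<epsilon> \<le> h n p} - Inf {p\<in>{0..1}. \<epsilon> \<le> h n p}) \<longlonglongrightarrow> 0)"

lemma S1_S2a: "S1 \<Longrightarrow> S2a"
  unfolding S1_def S2a_def
proof (intro allI impI)
  fix p assume S1: "\<forall>p. 0 \<le> p \<and> p < 1 - r \<longrightarrow> (\<lambda>n. p * h n p) \<longlonglongrightarrow> 0" and p: "0 \<le> p \<and> p < 1 - r"
  show "(\<lambda>n. h n p) \<longlonglongrightarrow> 0"
  proof (cases "p = 0")
    case True
    have "(\<lambda>n. h n p) = (\<lambda>n. 0)" using True h0 by (simp add: fun_eq_iff)
    then show ?thesis by (simp only: tendsto_const)
  next
    case False
    have "(\<lambda>n. p * h n p / p) \<longlonglongrightarrow> 0 / p" using S1 p False by (intro tendsto_divide tendsto_const) auto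
    then show ?thesis using False by simp
  qed
qed

lemma S2a_S1: "S2a \<Longrightarrow> S1"
  unfolding S1_def S2a_def
proof (intro allI impI)
  fix p assume S: "\<forall>p. 0 \<le> p \<and> p < 1 - r \<longrightarrow> (\<lambda>n. h n p) \<longlonglongrightarrow> 0" and p: "0 \<le> p \<and> p < 1 - r"
  have "(\<lambda>n. p * h n p) \<longlonglongrightarrow> p * 0" using S p by (intro tendsto_mult tendsto_const) auto
  then show "(\<lambda>n. p * h n p) \<longlonglongrightarrow> 0" by simp
qed

lemma S2a_S2b: "S2a \<Longrightarrow> S2b"
  unfolding S2b_def
proof (intro allI impI)
  fix p assume S: S2a and p: "1 - r < p \<and> p \<le> 1"
  show "(\<lambda>n. h n p) \<longlonglongrightarrow> 1"
  proof (rule order_tendstoI)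
    fix a :: real assume "1 < a"
    show "eventually (\<lambda>n. h n p < a) sequentially"
    proof (rule always_eventually, rule allI)
      fix n show "h n p < a" using hb[of p n] p r \<open>1 < a\<close> by linarith
    qed
  next
    fix a :: real assume a: "a < 1"
    define L0 where "L0 = p - 1 + r"
    define \<delta> where "\<delta> = min ((1 - a) * L0 / 2) ((1 - r) / 2)"
    define q where "q = 1 - r - \<delta>"
    have L0: "L0 > 0" using p unfolding L0_def by simp
    have \<delta>: "\<delta> > 0" "\<delta> \<le> (1 - a) * L0 / 2" "\<delta> \<le> (1 - r) / 2" using L0 a r unfolding \<delta>_def by (auto simp: min_def)
    define L where "L = p - q"
    have q: "0 \<le> q" "q < 1 - r" "q < p" using \<delta> p unfolding q_def by auto
    have L: "L = L0 + \<delta>" unfolding L_def L0_def q_def by simp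
    have hq: "(\<lambda>n. h n q) \<longlonglongrightarrow> 0" using S q unfolding S2a_def by auto
    have lim: "(\<lambda>n. R n - h n q - (1 - p)) \<longlonglongrightarrow> r - 0 - (1 - p)"
      by (intro tendsto_diff Rlim hq tendsto_const)
    have "a * L < r - 0 - (1 - p)"
    proof -
      have "(1 - a) * L0 > 0" using a L0 by simp
      moreover have "(1 - a) * L = (1 - a) * L0 + (1 - a) * \<delta>" by (simp add: L algebra_simps)
      moreover have "(1 - a) * \<delta> > 0" using a \<delta> by simp
      ultimately have "\<delta> < (1 - a) * L" using \<delta> by linarith
      moreover have "r - 0 - (1 - p) = L - \<delta>" using L unfolding L0_def by simp
      moreover have "a * L = L - (1 - a) * L" by (simp add: algebra_simps)
      ultimately show ?thesis by linarith
    qed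
    from order_tendstoD(1)[OF lim this]
    have ev: "eventually (\<lambda>n. a * L < R n - h n q - (1 - p)) sequentially" .
    show "eventually (\<lambda>n. a < h n p) sequentially"
    proof (rule eventually_mono[OF ev])
      fix n assume *: "a * L < R n - h n q - (1 - p)"
      have b1: "G n q - G n 0 \<le> h n q * (q - 0)" using mb[of 0 q n] q p by auto
      have b2: "G n p - G n q \<le> h n p * (p - q)" using mb[of q p n] q p by auto
      have b3: "G n 1 - G n p \<le> h n 1 * (1 - p)" using mb[of p 1 n] q p by auto
      have "h n q * q \<le> h n q * 1" using hb[of q n] q r by (intro mult_left_mono) auto
      moreover have "G n q \<le> h n q * q" using b1 G0[of n] by simp
      moreover have "R n - G n p \<le> 1 - p" using b3 G1[of n] h1[of n] by simp
      ultimately have "R n \<le> h n q + h n p * L + (1 - p)"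
        using b2 unfolding L_def by linarith
      then have "a * L < h n p * L" using * by linarith
      moreover have "L > 0" using L L0 \<delta> by simp
      ultimately show "a < h n p" by simp
    qed
  qed
qed

lemma S2_S3: "S2a \<Longrightarrow> S2b \<Longrightarrow> S3"
  unfolding S3_def
proof (intro allI impI)
  fix \<epsilon> :: real assume A: S2a S2b and e: "0 < \<epsilon> \<and> \<epsilon> \<le> 1/2"
  let ?Q = "\<lambda>n t. Inf {p\<in>{0..1}. t \<le> h n p}"
  show "(\<lambda>n. ?Q n (1 - \<epsilon>) - ?Q n \<epsilon>) \<longlonglongrightarrow> 0"
  proof (rule order_tendstoI)
    fix a :: real assume "a < 0"
    have "\<And>n. ?Q n \<epsilon> \<le> ?Q n (1 - \<epsilon>)" by (rule Q4) (use e in auto)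
    then show "eventually (\<lambda>n. a < ?Q n (1 - \<epsilon>) - ?Q n \<epsilon>) sequentially"
      using \<open>a < 0\<close> by (intro always_eventually allI) (smt (verit))
  next
    fix a :: real assume a: "0 < a"
    define \<delta> where "\<delta> = min (a / 3) (min (r / 2) ((1 - r) / 2))"
    have \<delta>: "\<delta> > 0" "\<delta> \<le> a / 3" "\<delta> \<le> r / 2" "\<delta> \<le> (1 - r) / 2" using a r unfolding \<delta>_def by (auto simp: min_def)
    have l1: "(\<lambda>n. h n (1 - r + \<delta>)) \<longlonglongrightarrow> 1" using A(2) \<delta> r unfolding S2b_def by auto
    have l0: "(\<lambda>n. h n (1 - r - \<delta>)) \<longlonglongrightarrow> 0" using A(1) \<delta> r unfolding S2a_def by auto
    have ev1: "eventually (\<lambda>n. 1 - \<epsilon> < h n (1 - r + \<delta>)) sequentially"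
      by (rule order_tendstoD(1)[OF l1]) (use e in auto)
    have ev0: "eventually (\<lambda>n. h n (1 - r - \<delta>) < \<epsilon>) sequentially"
      by (rule order_tendstoD(2)[OF l0]) (use e in auto)
    show "eventually (\<lambda>n. ?Q n (1 - \<epsilon>) - ?Q n \<epsilon> < a) sequentially"
    proof (rule eventually_mono[OF eventually_conj[OF ev1 ev0]])
      fix n assume n: "1 - \<epsilon> < h n (1 - r + \<delta>) \<and> h n (1 - r - \<delta>) < \<epsilon>"
      have u: "?Q n (1 - \<epsilon>) \<le> 1 - r + \<delta>" by (rule Qle) (use n e \<delta> r in auto)
      have l: "1 - r - \<delta> \<le> ?Q n \<epsilon>"
      proof (rule ccontr)
        assume "\<not> 1 - r - \<delta> \<le> ?Q n \<epsilon>"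
        then have "\<epsilon> \<le> h n (1 - r - \<delta>)" by (intro Q3) (use e \<delta> r in auto)
        then show False using n by simp
      qed
      show "?Q n (1 - \<epsilon>) - ?Q n \<epsilon> < a" using u l \<delta> by linarith
    qed
  qed
qed

lemma S3_S2a: "S3 \<Longrightarrow> S2a"
  unfolding S2a_def
proof (intro allI impI)
  fix p assume S: S3 and p: "0 \<le> p \<and> p < 1 - r"
  let ?Q = "\<lambda>n t. Inf {p\<in>{0..1}. t \<le> h n p}"
  show "(\<lambda>n. h n p) \<longlonglongrightarrow> 0"
  proof (rule order_tendstoI)
    fix a :: real assume "a < 0"
    show "eventually (\<lambda>n. a < h n p) sequentially"
    proof (rule always_eventually, rule allI)
      fix n show "a < h n p" using hb[of p n] p r \<open>a < 0\<close> by linarith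
    qed
  next
    fix a :: real assume a: "0 < a"
    define \<rho> where "\<rho> = r / (1 - p)"
    have pr: "1 - p > r" using p by simp
    have \<rho>: "0 < \<rho>" "\<rho> < 1" using pr r unfolding \<rho>_def by (auto simp: divide_less_eq)
    define \<epsilon> where "\<epsilon> = min (1/2) (min a ((1 - \<rho>) / 2))"
    have e: "0 < \<epsilon>" "\<epsilon> \<le> 1/2" "\<epsilon> \<le> a" "\<epsilon> < 1 - \<rho>" using a \<rho> unfolding \<epsilon>_def by (auto simp: min_def)
    have key: "p < 1 - r / (1 - \<epsilon>)"
    proof -
      have "r = \<rho> * (1 - p)" using pr r unfolding \<rho>_def by simp
      also have "\<dots> < (1 - \<epsilon>) * (1 - p)" using e pr r by (intro mult_strict_right_mono) auto
      finally have "r / (1 - \<epsilon>) < 1 - p" using e by (simp add: divide_less_eq mult.commute)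
      then show ?thesis by simp
    qed
    have dlim: "(\<lambda>n. ?Q n (1 - \<epsilon>) - ?Q n \<epsilon>) \<longlonglongrightarrow> 0" using S e unfolding S3_def by auto
    have lim: "(\<lambda>n. 1 - R n / (1 - \<epsilon>) - (?Q n (1 - \<epsilon>) - ?Q n \<epsilon>)) \<longlonglongrightarrow> 1 - r / (1 - \<epsilon>) - 0"
      by (intro tendsto_diff tendsto_divide tendsto_const Rlim dlim) (use e in auto)
    have ev: "eventually (\<lambda>n. p < 1 - R n / (1 - \<epsilon>) - (?Q n (1 - \<epsilon>) - ?Q n \<epsilon>)) sequentially"
      by (rule order_tendstoD(1)[OF lim]) (use key in simp)
    show "eventually (\<lambda>n. h n p < a) sequentially"
    proof (rule eventually_mono[OF ev])
      fix n assume n: "p < 1 - R n / (1 - \<epsilon>) - (?Q n (1 - \<epsilon>) - ?Q n \<epsilon>)"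
      define b where "b = ?Q n (1 - \<epsilon>)"
      have b01: "0 \<le> b" "b \<le> 1"
      proof -
        show "b \<le> 1" unfolding b_def by (rule Qle) (use e h1 in auto)
        show "0 \<le> b" unfolding b_def by (rule cInf_greatest[OF Qne]) (use e in auto)
      qed
      have Gb: "0 \<le> G n b" using mb[of 0 b n] b01 h0[of n] G0[of n] by simp
      have "(1 - \<epsilon>) * (1 - b) \<le> G n 1 - G n b"
      proof (cases "b = 1")
        case True then show ?thesis by simp
      next
        case False
        then have "b < 1" using b01 by simp
        from MVT2[OF this deriv] obtain z where z: "b < z" "z < 1" "G n 1 - G n b = (1 - b) * h n z" by blast
        have "1 - \<epsilon> \<le> h n z" using Q3[of "1 - \<epsilon>" n z] z e unfolding b_def by auto
        then show ?thesis using z \<open>b < 1\<close> by (simp add: mult.commute mult_right_mono)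
      qed
      then have "(1 - \<epsilon>) * (1 - b) \<le> R n" using Gb G1[of n] by simp
      then have "1 - b \<le> R n / (1 - \<epsilon>)" using e by (simp add: le_divide_eq mult.commute)
      then have "p < ?Q n \<epsilon>" using n unfolding b_def by linarith
      then have "h n p < \<epsilon>" by (intro Q2) (use p r in auto)
      then show "h n p < a" using e by simp
    qed
  qed
qed

lemma abstract_main:
  "(S1 \<longleftrightarrow> S2a \<and> S2b) \<and> (S1 \<longleftrightarrow> S3)"
  using S1_S2a S2a_S1 S2a_S2b S2_S3 S3_S2a by blast

lemma abstract_main':
  "((\<forall>p. 0 \<le> p \<and> p < 1 - r \<longrightarrow> (\<lambda>n. p * h n p) \<longlonglongrightarrow> 0) \<longleftrightarrow>
     ((\<forall>p. 0 \<le> p \<and> p < 1 - r \<longrightarrow> (\<lambda>n. h n p) \<longlonglongrightarrow> 0) \<and>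
      (\<forall>p. 1 - r < p \<and> p \<le> 1 \<longrightarrow> (\<lambda>n. h n p) \<longlonglongrightarrow> 1)))
   \<and> ((\<forall>p. 0 \<le> p \<and> p < 1 - r \<longrightarrow> (\<lambda>n. p * h n p) \<longlonglongrightarrow> 0) \<longleftrightarrow>
     (\<forall>\<epsilon>. 0 < \<epsilon> \<and> \<epsilon> \<le> 1/2 \<longrightarrow>
             (\<lambda>n. Inf {p\<in>{0..1}. 1 - \<epsilon> \<le> h n p} - Inf {p\<in>{0..1}. \<epsilon> \<le> h n p}) \<longlonglongrightarrow> 0))"
  using abstract_main unfolding S1_def S2a_def S2b_def S3_def .

end

theorem proposition6:
  fixes N :: "nat \<Rightarrow> nat" and C :: "nat \<Rightarrow> (nat \<Rightarrow> bool) set" and r :: real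
  assumes codes: "\<And>n. binary_linear_code (N n) (C n) \<and> proper_code (N n) (C n)
                        \<and> min_dist_ge2 (C n) \<and> N n > 0"
    and r: "0 < r" "r < 1"
    and rate: "(\<lambda>n. code_rate (N n) (C n)) \<longlonglongrightarrow> r"
  shows "((\<forall>p. 0 \<le> p \<and> p < 1 - r \<longrightarrow> (\<lambda>n. avg_bitMAP_erasure (N n) (C n) p) \<longlonglongrightarrow> 0)
          \<longleftrightarrow>
          ((\<forall>p. 0 \<le> p \<and> p < 1 - r \<longrightarrow> (\<lambda>n. avg_EXIT (N n) (C n) p) \<longlonglongrightarrow> 0) \<and>
           (\<forall>p. 1 - r < p \<and> p \<le> 1 \<longrightarrow> (\<lambda>n. avg_EXIT (N n) (C n) p) \<longlonglongrightarrow> 1)))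
       \<and>
         ((\<forall>p. 0 \<le> p \<and> p < 1 - r \<longrightarrow> (\<lambda>n. avg_bitMAP_erasure (N n) (C n) p) \<longlonglongrightarrow> 0)
          \<longleftrightarrow>
          (\<forall>\<epsilon>. 0 < \<epsilon> \<and> \<epsilon> \<le> 1/2 \<longrightarrow>
             (\<lambda>n. exit_quantile (N n) (C n) (1 - \<epsilon>) - exit_quantile (N n) (C n) \<epsilon>) \<longlonglongrightarrow> 0))"
proof -
  define h where "h = (\<lambda>n. avg_EXIT (N n) (C n))"
  define G where "G = (\<lambda>n. fG (N n) (C n))"
  define R where "R = (\<lambda>n. code_rate (N n) (C n))"
  have c1: "\<And>n. binary_linear_code (N n) (C n)" and c2: "\<And>n. proper_code (N n) (C n)"
    and c3: "\<And>n. min_dist_ge2 (C n)" and c4: "\<And>n. N n > 0" using codes by auto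
  note cs = c1 c2 c3 c4
  have Pb: "\<And>n p. avg_bitMAP_erasure (N n) (C n) p = p * h n p"
    unfolding h_def by (rule Pb_eq[OF cs])
  have A: "((\<forall>p. 0 \<le> p \<and> p < 1 - r \<longrightarrow> (\<lambda>n. p * h n p) \<longlonglongrightarrow> 0) \<longleftrightarrow>
     ((\<forall>p. 0 \<le> p \<and> p < 1 - r \<longrightarrow> (\<lambda>n. h n p) \<longlonglongrightarrow> 0) \<and>
      (\<forall>p. 1 - r < p \<and> p \<le> 1 \<longrightarrow> (\<lambda>n. h n p) \<longlonglongrightarrow> 1)))
   \<and> ((\<forall>p. 0 \<le> p \<and> p < 1 - r \<longrightarrow> (\<lambda>n. p * h n p) \<longlonglongrightarrow> 0) \<longleftrightarrow>
     (\<forall>\<epsilon>. 0 < \<epsilon> \<and> \<epsilon> \<le> 1/2 \<longrightarrow>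
             (\<lambda>n. Inf {p\<in>{0..1}. 1 - \<epsilon> \<le> h n p} - Inf {p\<in>{0..1}. \<epsilon> \<le> h n p}) \<longlonglongrightarrow> 0))"
  proof (rule abstract_main'[of G h R r])
    show "\<And>n x. (G n has_real_derivative h n x) (at x)" unfolding G_def h_def by (rule fG_deriv[OF cs])
    show "\<And>n x y. 0 \<le> x \<Longrightarrow> x \<le> y \<Longrightarrow> y \<le> 1 \<Longrightarrow> h n x \<le> h n y" unfolding h_def by (rule h_mono[OF cs])
    show "\<And>n x. 0 \<le> x \<Longrightarrow> x \<le> 1 \<Longrightarrow> 0 \<le> h n x \<and> h n x \<le> 1" unfolding h_def by (rule h_bounds[OF cs])
    show "\<And>n. h n 0 = 0" unfolding h_def by (rule h0[OF cs])
    show "\<And>n. h n 1 = 1" unfolding h_def by (rule h1[OF cs])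
    show "\<And>n. G n 0 = 0" unfolding G_def by (rule fG0[OF cs])
    show "\<And>n. G n 1 = R n" unfolding G_def R_def by (rule fG1[OF cs])
    show "R \<longlonglongrightarrow> r" unfolding R_def by (rule rate)
  qed (use r in auto)
  show ?thesis unfolding Pb exit_quantile_def using A unfolding h_def .
qed

end
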